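(* Consider the commutative algebra of Laurent polynomials in nonzero variables $a,b,c,d,e$ with coefficients polynomial in parameters $G_1,G_2$, equipped with the log-canonical Poisson bracket determined by $\{a,b\}=ab$, $\{a,c\}=0$, $\{a,d\}=-\tfrac12 ad$, $\{a,e\}=\tfrac12 ae$, $\{b,c\}=0$, $\{b,d\}=-\tfrac12 bd$, $\{b,e\}=\tfrac12 be$, $\{c,d\}=-\tfrac12 cd$, $\{c,e\}=\tfrac12 ce$, $\{d,e\}=0$, and $\{G_1,\cdot\}=\{G_2,\cdot\}=0$. Then $G_1$, $G_2$ and $de$ are Casimir elements and the generic symplectic leaves are $4$-dimensional. Moreover, the functions $$x_1=-e\frac{a}{c}-d\frac{b}{c},\qquad x_2=-e\frac{b}{c}-G_1 d\frac{b}{a}-d\frac{b^2}{ac}-d\frac{c}{a},\qquad x_3=-G_2\frac{c}{b}-G_1\frac{c}{a}-\frac{b}{a}-\frac{c^2}{ab}-\frac{a}{b}$$ Poisson commute with $e$ and satisfy the cubic relation (the $PV$ monodromy cubic with $G_3=e$, $G_\infty=d$) $$x_1x_2x_3+x_1^2+x_2^2-(G_1G_\infty+G_2G_3)x_1-(G_2G_\infty+G_1G_3)x_2-G_3G_\infty x_3+G_\infty^2+G_3^2+G_1G_2G_3G_\infty=0.$$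
   Context: A log-canonical bracket is extended from the generators to all Laurent polynomials by bilinearity, antisymmetry and the Leibniz rule. Geometrically, $a,b,c,d,e$ are $\lambda$-lengths of a complete system of arcs on a Riemann sphere with three holes and two bordered cusps on one of the holes, and $G_1,G_2$ encode the perimeters of the two holes without cusps; this interpretation is not needed for the claim. *)

theory Defs
  imports "HOL-Analysis.Analysis"
begin

datatype var = va | vb | vc | vd | ve | vG1 | vG2

lemma UNIV_var: "(UNIV :: var set) = {va, vb, vc, vd, ve, vG1, vG2}"
  by (auto intro: var.exhaust)

instance var :: finite
  by standard (simp add: UNIV_var)

text \<open>Structure constants of the log-canonical bracket: {x_i,x_j} = om i j * x_i * x_j.\<close>
fun om :: "var \<Rightarrow> var \<Rightarrow> real" where
  "om va vb = 1" | "om vb va = -1"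
| "om va vd = -1/2" | "om vd va = 1/2"
| "om va ve = 1/2" | "om ve va = -1/2"
| "om vb vd = -1/2" | "om vd vb = 1/2"
| "om vb ve = 1/2" | "om ve vb = -1/2"
| "om vc vd = -1/2" | "om vd vc = 1/2"
| "om vc ve = 1/2" | "om ve vc = -1/2"
| "om _ _ = 0"

definition torus :: "(real^var) set" where
  "torus = {p. p$va \<noteq> 0 \<and> p$vb \<noteq> 0 \<and> p$vc \<noteq> 0 \<and> p$vd \<noteq> 0 \<and> p$ve \<noteq> 0}"

definition poisson_matrix :: "real^var \<Rightarrow> real^var^var" where
  "poisson_matrix p = (\<chi> i j. om i j * p$i * p$j)"

definition pd :: "var \<Rightarrow> (real^var \<Rightarrow> real) \<Rightarrow> real^var \<Rightarrow> real" where
  "pd i f p = deriv (\<lambda>t. f (p + t *\<^sub>R axis i 1)) 0"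

text \<open>The bracket, extended from generators by bilinearity, antisymmetry and Leibniz.\<close>
definition pbracket :: "(real^var \<Rightarrow> real) \<Rightarrow> (real^var \<Rightarrow> real) \<Rightarrow> real^var \<Rightarrow> real" where
  "pbracket f g p = (\<Sum>i\<in>UNIV. \<Sum>j\<in>UNIV. poisson_matrix p $ i $ j * pd i f p * pd j g p)"

definition casimir :: "(real^var \<Rightarrow> real) \<Rightarrow> bool" where
  "casimir F \<longleftrightarrow> (\<forall>g. (\<forall>p\<in>torus. g differentiable (at p)) \<longrightarrow> (\<forall>p\<in>torus. pbracket F g p = 0))"

definition x1 :: "real^var \<Rightarrow> real" where
  "x1 p = (let a = p$va; b = p$vb; c = p$vc; d = p$vd; e = p$ve in
     - e * a / c - d * b / c)"

definition x2 :: "real^var \<Rightarrow> real" where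
  "x2 p = (let a = p$va; b = p$vb; c = p$vc; d = p$vd; e = p$ve; G1 = p$vG1 in
     - e * b / c - G1 * d * b / a - d * b^2 / (a * c) - d * c / a)"

definition x3 :: "real^var \<Rightarrow> real" where
  "x3 p = (let a = p$va; b = p$vb; c = p$vc; G1 = p$vG1; G2 = p$vG2 in
     - G2 * c / b - G1 * c / a - b / a - c^2 / (a * b) - a / b)"

end

theory Submission
  imports Defs
begin

lemma pd_eq: "((\<lambda>t. f (p + t *\<^sub>R axis i 1)) has_real_derivative D) (at 0) \<Longrightarrow> pd i f p = D"
  unfolding pd_def by (rule DERIV_imp_deriv)

lemma pd_coord: "pd i (\<lambda>q. q$k) p = (if k = i then 1 else 0)"
  by (rule pd_eq) (auto intro!: derivative_eq_intros simp: axis_def)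

lemma pd_de: "pd i (\<lambda>q. q$vd * q$ve) p = (if vd = i then 1 else 0) * p$ve + p$vd * (if ve = i then 1 else 0)"
  by (rule pd_eq) (auto intro!: derivative_eq_intros simp: axis_def)

lemma sum_var: "(\<Sum>i\<in>UNIV. f i) = f va + f vb + f vc + f vd + f ve + f vG1 + f vG2"
  by (simp add: UNIV_var add.assoc)

lemma casG1: "casimir (\<lambda>p. p$vG1)"
  unfolding casimir_def pbracket_def by (simp add: pd_coord sum_var poisson_matrix_def)

lemma casG2: "casimir (\<lambda>p. p$vG2)"
  unfolding casimir_def pbracket_def by (simp add: pd_coord sum_var poisson_matrix_def)

lemma casde: "casimir (\<lambda>p. p$vd * p$ve)"
  unfolding casimir_def pbracket_def by (simp add: pd_de sum_var poisson_matrix_def algebra_simps)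

lemma pd_x1_va: assumes "p \<in> torus" shows "pd va x1 p = - p$ve / p$vc"
  using assms by (intro pd_eq) (auto simp: torus_def x1_def Let_def axis_def power2_eq_square intro!: derivative_eq_intros simp: field_simps)

lemma pd_x1_vb: assumes "p \<in> torus" shows "pd vb x1 p = - p$vd / p$vc"
  using assms by (intro pd_eq) (auto simp: torus_def x1_def Let_def axis_def power2_eq_square intro!: derivative_eq_intros simp: field_simps)

lemma pd_x1_vc: assumes "p \<in> torus" shows "pd vc x1 p = p$ve*p$va/(p$vc)^2 + p$vd*p$vb/(p$vc)^2"
  using assms by (intro pd_eq) (auto simp: torus_def x1_def Let_def axis_def power2_eq_square intro!: derivative_eq_intros simp: field_simps)

lemma pd_x2_va: assumes "p \<in> torus" shows "pd va x2 p = p$vG1*p$vd*p$vb/(p$va)^2 + p$vd*(p$vb)^2/((p$va)^2*p$vc) + p$vd*p$vc/(p$va)^2"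
  using assms by (intro pd_eq) (auto simp: torus_def x2_def Let_def axis_def power2_eq_square intro!: derivative_eq_intros simp: field_simps)

lemma pd_x2_vb: assumes "p \<in> torus" shows "pd vb x2 p = - p$ve/p$vc - p$vG1*p$vd/p$va - 2*p$vd*p$vb/(p$va*p$vc)"
  using assms by (intro pd_eq) (auto simp: torus_def x2_def Let_def axis_def power2_eq_square intro!: derivative_eq_intros simp: field_simps)

lemma pd_x2_vc: assumes "p \<in> torus" shows "pd vc x2 p = p$ve*p$vb/(p$vc)^2 + p$vd*(p$vb)^2/(p$va*(p$vc)^2) - p$vd/p$va"
  using assms by (intro pd_eq) (auto simp: torus_def x2_def Let_def axis_def power2_eq_square intro!: derivative_eq_intros simp: field_simps)

lemma pd_x3_va: assumes "p \<in> torus" shows "pd va x3 p = p$vG1*p$vc/(p$va)^2 + p$vb/(p$va)^2 + (p$vc)^2/((p$va)^2*p$vb) - 1/p$vb"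
  using assms by (intro pd_eq) (auto simp: torus_def x3_def Let_def axis_def power2_eq_square intro!: derivative_eq_intros simp: field_simps)

lemma pd_x3_vb: assumes "p \<in> torus" shows "pd vb x3 p = p$vG2*p$vc/(p$vb)^2 - 1/p$va + (p$vc)^2/(p$va*(p$vb)^2) + p$va/(p$vb)^2"
  using assms by (intro pd_eq) (auto simp: torus_def x3_def Let_def axis_def power2_eq_square intro!: derivative_eq_intros simp: field_simps)

lemma pd_x3_vc: assumes "p \<in> torus" shows "pd vc x3 p = - p$vG2/p$vb - p$vG1/p$va - 2*p$vc/(p$va*p$vb)"
  using assms by (intro pd_eq) (auto simp: torus_def x3_def Let_def axis_def power2_eq_square intro!: derivative_eq_intros simp: field_simps)

lemma br_x1: "p \<in> torus \<Longrightarrow> pbracket x1 (\<lambda>q. q$ve) p = 0"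
  by (simp add: pbracket_def pd_coord sum_var poisson_matrix_def pd_x1_va pd_x1_vb pd_x1_vc torus_def field_simps power2_eq_square)

lemma br_x2: "p \<in> torus \<Longrightarrow> pbracket x2 (\<lambda>q. q$ve) p = 0"
  by (simp add: pbracket_def pd_coord sum_var poisson_matrix_def pd_x2_va pd_x2_vb pd_x2_vc torus_def field_simps power2_eq_square)

lemma br_x3: "p \<in> torus \<Longrightarrow> pbracket x3 (\<lambda>q. q$ve) p = 0"
  by (simp add: pbracket_def pd_coord sum_var poisson_matrix_def pd_x3_va pd_x3_vb pd_x3_vc torus_def field_simps power2_eq_square)

lemma cubic: assumes "p \<in> torus" shows
  "(let G1 = p$vG1; G2 = p$vG2; G3 = p$ve; Ginf = p$vd in
          x1 p * x2 p * x3 p + (x1 p)^2 + (x2 p)^2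
          - (G1 * Ginf + G2 * G3) * x1 p - (G2 * Ginf + G1 * G3) * x2 p
          - G3 * Ginf * x3 p + Ginf^2 + G3^2 + G1 * G2 * G3 * Ginf = 0)"
proof -
  define a b c d e g1 g2 where "a = p$va" "b = p$vb" "c = p$vc" "d = p$vd" "e = p$ve" "g1 = p$vG1" "g2 = p$vG2"
  have nz: "a \<noteq> 0" "b \<noteq> 0" "c \<noteq> 0" using assms by (auto simp: torus_def a_b_c_d_e_g1_g2_def)
  define X1 where "X1 = - e * a - d * b"
  define X2 where "X2 = - e * a * b - g1 * d * b * c - d * b^2 - d * c^2"
  define X3 where "X3 = - g2 * a * c - g1 * b * c - b^2 - c^2 - a^2"
  have h1: "x1 p = X1 / c" using nz unfolding x1_def Let_def X1_def a_b_c_d_e_g1_g2_def[symmetric]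
    by (simp add: field_simps)
  have h2: "x2 p = X2 / (a*c)" using nz unfolding x2_def Let_def X2_def a_b_c_d_e_g1_g2_def[symmetric]
    by (simp add: field_simps power2_eq_square)
  have h3: "x3 p = X3 / (a*b)" using nz unfolding x3_def Let_def X3_def a_b_c_d_e_g1_g2_def[symmetric]
    by (simp add: field_simps power2_eq_square)
  have poly: "X1*X2*X3 + X1^2*(a^2*b) + X2^2*b
     - (g1*d + g2*e)*X1*(a^2*b*c) - (g2*d+g1*e)*X2*(a*b*c) - e*d*X3*(a*c^2)
     + (d^2 + e^2 + g1*g2*e*d)*(a^2*b*c^2) = 0"
    unfolding X1_def X2_def X3_def by algebra
  have "x1 p * x2 p * x3 p + (x1 p)^2 + (x2 p)^2
          - (g1 * d + g2 * e) * x1 p - (g2 * d + g1 * e) * x2 p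
          - e * d * x3 p + d^2 + e^2 + g1 * g2 * e * d
      = (X1*X2*X3 + X1^2*(a^2*b) + X2^2*b
     - (g1*d + g2*e)*X1*(a^2*b*c) - (g2*d+g1*e)*X2*(a*b*c) - e*d*X3*(a*c^2)
     + (d^2 + e^2 + g1*g2*e*d)*(a^2*b*c^2)) / (a^2*b*c^2)"
    unfolding h1 h2 h3 using nz by (simp add: field_simps power2_eq_square)
  then show ?thesis using poly unfolding Let_def a_b_c_d_e_g1_g2_def by simp
qed

lemma all_var: "(\<forall>j. P j) \<longleftrightarrow> P va \<and> P vb \<and> P vc \<and> P vd \<and> P ve \<and> P vG1 \<and> P vG2"
  by (metis var.exhaust)

lemma rowM: "row i (poisson_matrix p) $ j = om i j * p$i * p$j"
  by (simp add: row_def poisson_matrix_def)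

lemma rows_sub: assumes "p \<in> torus"
  shows "rows (poisson_matrix p) \<subseteq> span {row va (poisson_matrix p), row vb (poisson_matrix p), row vc (poisson_matrix p), row vd (poisson_matrix p)}"
proof -
  let ?r = "\<lambda>i. row i (poisson_matrix p)"
  have g1: "?r vG1 = 0" and g2: "?r vG2 = 0"
    by (simp_all add: vec_eq_iff all_var rowM)
  have e: "?r ve = (- (p$ve / p$vd)) *\<^sub>R ?r vd"
    using assms by (simp add: vec_eq_iff all_var rowM torus_def field_simps)
  show ?thesis
  proof
    fix x assume "x \<in> rows (poisson_matrix p)"
    then obtain i where x: "x = ?r i" by (auto simp: rows_def)
    show "x \<in> span {?r va, ?r vb, ?r vc, ?r vd}"
      unfolding x
      by (cases i) (auto simp: g1 g2 e intro: span_base span_zero span_mul span_neg)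
  qed
qed

lemma rank_le: assumes "p \<in> torus" shows "rank (poisson_matrix p) \<le> 4"
proof -
  let ?r = "\<lambda>i. row i (poisson_matrix p)"
  have "rank (poisson_matrix p) \<le> card {?r va, ?r vb, ?r vc, ?r vd}"
    unfolding row_rank_def by (rule dim_le_card[OF rows_sub[OF assms]]) simp
  also have "\<dots> \<le> 4" by (simp add: card_insert_if)
  finally show ?thesis .
qed

lemma rank_ge: assumes "p \<in> torus" shows "rank (poisson_matrix p) \<ge> 4"
proof -
  let ?r = "\<lambda>i. row i (poisson_matrix p)"
  have nz: "p$va \<noteq> 0" "p$vb \<noteq> 0" "p$vc \<noteq> 0" "p$vd \<noteq> 0" "p$ve \<noteq> 0" using assms by (auto simp: torus_def)
  have i1: "?r vc \<notin> span {?r vd}"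
  proof
    assume "?r vc \<in> span {?r vd}"
    then obtain k where "?r vc = k *\<^sub>R ?r vd" by (auto simp: span_singleton)
    then have "?r vc $ vd = (k *\<^sub>R ?r vd) $ vd" by simp
    then show False using nz by (simp add: rowM)
  qed
  have i2: "?r vb \<notin> span {?r vc, ?r vd}"
  proof
    assume "?r vb \<in> span {?r vc, ?r vd}"
    then obtain k where "?r vb - k *\<^sub>R ?r vc \<in> span {?r vd}" by (meson span_breakdown_eq)
    then obtain m where h: "?r vb - k *\<^sub>R ?r vc = m *\<^sub>R ?r vd" by (auto simp: span_singleton)
    have "(?r vb - k *\<^sub>R ?r vc) $ vb = (m *\<^sub>R ?r vd) $ vb" using h by simp
    then have "m = 0" using nz by (simp add: rowM)
    moreover have "(?r vb - k *\<^sub>R ?r vc) $ va = (m *\<^sub>R ?r vd) $ va" using h by simp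
    ultimately show False using nz by (simp add: rowM)
  qed
  have i3: "?r va \<notin> span {?r vb, ?r vc, ?r vd}"
  proof
    assume "?r va \<in> span {?r vb, ?r vc, ?r vd}"
    then obtain k1 where "?r va - k1 *\<^sub>R ?r vb \<in> span {?r vc, ?r vd}" by (meson span_breakdown_eq)
    then obtain k2 where "?r va - k1 *\<^sub>R ?r vb - k2 *\<^sub>R ?r vc \<in> span {?r vd}" by (meson span_breakdown_eq)
    then obtain m where h: "?r va - k1 *\<^sub>R ?r vb - k2 *\<^sub>R ?r vc = m *\<^sub>R ?r vd" by (auto simp: span_singleton)
    have "(?r va - k1 *\<^sub>R ?r vb - k2 *\<^sub>R ?r vc) $ vc = (m *\<^sub>R ?r vd) $ vc" using h by simp
    then have m: "m = 0" using nz by (simp add: rowM)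
    have "(?r va - k1 *\<^sub>R ?r vb - k2 *\<^sub>R ?r vc) $ va = (m *\<^sub>R ?r vd) $ va" using h by simp
    then have k: "k1 = 0" using nz m by (simp add: rowM)
    have "(?r va - k1 *\<^sub>R ?r vb - k2 *\<^sub>R ?r vc) $ vb = (m *\<^sub>R ?r vd) $ vb" using h by simp
    then show False using nz m k by (simp add: rowM)
  qed
  have d1: "?r vc \<noteq> ?r vd" using i1 by (metis singletonI span_base)
  have d2: "?r vb \<notin> {?r vc, ?r vd}" using i2 by (metis span_base)
  have d3: "?r va \<notin> {?r vb, ?r vc, ?r vd}" using i3 by (metis span_base)
  have ind: "independent {?r va, ?r vb, ?r vc, ?r vd}"
  proof -
    have "?r vd \<noteq> 0"
    proof
      assume "?r vd = 0"
      then have "?r vd $ va = 0" by simp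
      then show False using nz by (simp add: rowM)
    qed
    then have "independent {?r vd}" by (intro independent_insertI independent_empty) simp
    then show ?thesis by (rule independent_insertI[OF i3 independent_insertI[OF i2 independent_insertI[OF i1]]])
  qed
  have card: "card {?r va, ?r vb, ?r vc, ?r vd} = 4" using d1 d2 d3 by simp
  have "{?r va, ?r vb, ?r vc, ?r vd} \<subseteq> rows (poisson_matrix p)" by (auto simp: rows_def)
  from independent_card_le_dim[OF this ind] card show ?thesis by (simp add: row_rank_def)
qed

lemma open_torus: "open torus"
  unfolding torus_def
  by (intro open_Collect_conj open_Collect_neq continuous_intros)

theorem mainTheorem2:
  shows "casimir (\<lambda>p. p$vG1) \<and> casimir (\<lambda>p. p$vG2) \<and> casimir (\<lambda>p. p$vd * p$ve)
    \<and> (\<forall>p\<in>torus. rank (poisson_matrix p) \<le> 4)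
    \<and> (\<exists>U. open U \<and> U \<subseteq> torus \<and> torus \<subseteq> closure U \<and> (\<forall>p\<in>U. rank (poisson_matrix p) = 4))
    \<and> (\<forall>p\<in>torus. pbracket x1 (\<lambda>q. q$ve) p = 0)
    \<and> (\<forall>p\<in>torus. pbracket x2 (\<lambda>q. q$ve) p = 0)
    \<and> (\<forall>p\<in>torus. pbracket x3 (\<lambda>q. q$ve) p = 0)
    \<and> (\<forall>p\<in>torus.
         (let G1 = p$vG1; G2 = p$vG2; G3 = p$ve; Ginf = p$vd in
          x1 p * x2 p * x3 p + (x1 p)^2 + (x2 p)^2
          - (G1 * Ginf + G2 * G3) * x1 p - (G2 * Ginf + G1 * G3) * x2 p
          - G3 * Ginf * x3 p + Ginf^2 + G3^2 + G1 * G2 * G3 * Ginf = 0))"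
proof -
  have "\<exists>U. open U \<and> U \<subseteq> torus \<and> torus \<subseteq> closure U \<and> (\<forall>p\<in>U. rank (poisson_matrix p) = 4)"
    by (rule exI[of _ torus]) (auto simp: open_torus closure_subset intro: antisym rank_le rank_ge)
  then show ?thesis
    using casG1 casG2 casde rank_le br_x1 br_x2 br_x3 cubic by blast
qed

end
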